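(* Let $\eta\in(0,1)$. For $N_S>0$, $\xi\in[0,1]$ let $$I(\xi;N_S)=4N_S\left\{\frac{1-\xi}{1-2\eta^2\left(\sqrt{\xi N_S(1+\xi N_S)}-\xi N_S\right)}+\frac{\xi\left[(1-\eta^2)^2+\eta^4\right]}{(1-\eta^2)\left(1+2\xi N_S\eta^2(1-\eta^2)\right)}\right\},$$ and for $\mathcal N_S>0$ and real $M\ge1$ let $\mathcal I(M;\mathcal N_S)=\max_{\xi\in[0,1]}M\,I(\xi;\mathcal N_S/M)$. Let $\bar N_S(\eta)=0$ if $\eta\le1/\sqrt2$, and for $\eta>1/\sqrt2$ let $\bar N_S(\eta)$ be the unique zero on $(0,\infty)$ of $N_S\mapsto\frac{1}{4N_S}\partial_\xi I(\xi;N_S)|_{\xi=1}$. Then there exists $\bar K(\eta)\ge0$ such that for every $\mathcal N_S>\bar K(\eta)$, $M=1$ maximizes $\mathcal I(\cdot;\mathcal N_S)$ over $M\in[1,\infty]$ (with $M=\infty$ understood as the limit $M\to\infty$). Moreover $\bar K(\eta)=0$ for $0<\eta\le1/\sqrt2$, and $\bar K(\eta)\ge\bar N_S(\eta)$ for $\eta>1/\sqrt2$.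
   Context: $I(\xi;N_S)$ is the quantum Fisher information for estimating the transmission $\eta$ of a pure-loss (zero-temperature) bosonic channel using one single-mode pure displaced squeezed probe with mean photon number $N_S$, fraction $\xi$ in squeezing and $1-\xi$ in displacement. With $M$ probes and total photon budget $\mathcal N_S=MN_S$, the total quantum Fisher information is $M\,I(\xi;\mathcal N_S/M)$, with $M$ relaxed to a continuous variable. *)

theory Defs
  imports "HOL-Analysis.Analysis"
begin

definition QFI :: "real \<Rightarrow> real \<Rightarrow> real \<Rightarrow> real" where
  "QFI eta xi N = 4 * N *
     ((1 - xi) / (1 - 2 * eta^2 * (sqrt (xi * N * (1 + xi * N)) - xi * N))
      + xi * ((1 - eta^2)^2 + eta^4) /
        ((1 - eta^2) * (1 + 2 * xi * N * eta^2 * (1 - eta^2))))"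

definition QFI_tot :: "real \<Rightarrow> real \<Rightarrow> real \<Rightarrow> real" where
  "QFI_tot eta M NN = (SUP xi\<in>{0..1}. M * QFI eta xi (NN / M))"

definition dQFI1 :: "real \<Rightarrow> real \<Rightarrow> real" where
  "dQFI1 eta N = deriv (\<lambda>xi. QFI eta xi N) 1 / (4 * N)"

definition Nbar :: "real \<Rightarrow> real" where
  "Nbar eta = (if eta \<le> 1 / sqrt 2 then 0
               else (THE N. N > 0 \<and> dQFI1 eta N = 0))"

end

theory Submission
  imports Defs "HOL-Real_Asymp.Real_Asymp"
begin

definition gA :: "real \<Rightarrow> real \<Rightarrow> real" where
  "gA eta n = 1 / (1 - 2 * eta^2 * (sqrt (n * (1 + n)) - n))"

definition gB :: "real \<Rightarrow> real \<Rightarrow> real" where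
  "gB eta n = ((1 - eta^2)^2 + eta^4) / ((1 - eta^2) * (1 + 2 * n * eta^2 * (1 - eta^2)))"

definition FF :: "real \<Rightarrow> real \<Rightarrow> real \<Rightarrow> real" where
  "FF eta xi N = (1 - xi) * gA eta (xi * N) + xi * gB eta (xi * N)"

lemma QFI_eq: "QFI eta xi N = 4 * N * FF eta xi N"
  unfolding QFI_def FF_def gA_def gB_def by (simp add: mult_ac)

lemma g_bounds:
  fixes n :: real assumes "n \<ge> 0"
  shows "0 \<le> sqrt (n * (1 + n)) - n" "sqrt (n * (1 + n)) - n < 1/2"
proof -
  have "sqrt (n * n) \<le> sqrt (n * (1 + n))" using assms
    by (intro real_sqrt_le_mono) (simp add: mult_left_mono)
  then show "0 \<le> sqrt (n * (1 + n)) - n" using assms by simp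
  have "sqrt (n * (1 + n)) < sqrt ((n + 1/2)^2)"
    by (intro real_sqrt_less_mono) (simp add: power2_eq_square algebra_simps)
  then show "sqrt (n * (1 + n)) - n < 1/2" using assms by simp
qed

context
  fixes eta :: real
  assumes e0: "0 < eta" and e1: "eta < 1"
begin

lemma a_bounds: "0 < eta^2" "eta^2 < 1"
  using e0 e1 by (auto simp: power_less_one_iff)

lemma gA_bounds:
  assumes "n \<ge> 0" shows "1 \<le> gA eta n" "gA eta n \<le> 1 / (1 - eta^2)"
proof -
  define g where "g = sqrt (n * (1 + n)) - n"
  have g: "0 \<le> g" "g < 1/2" using g_bounds[OF assms] by (auto simp: g_def)
  have d1: "1 - 2 * eta^2 * g \<le> 1" using g a_bounds by simp
  have d2: "1 - eta^2 \<le> 1 - 2 * eta^2 * g" using g a_bounds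
    by (simp add: mult_left_mono)
  have d0: "0 < 1 - eta^2" using a_bounds by simp
  show "1 \<le> gA eta n" unfolding gA_def g_def[symmetric] using d1 d2 d0
    by (simp add: le_divide_eq)
  show "gA eta n \<le> 1 / (1 - eta^2)" unfolding gA_def g_def[symmetric] using d1 d2 d0
    by (intro divide_left_mono) auto
qed

lemma gB_bounds:
  assumes "n \<ge> 0" shows "0 \<le> gB eta n" "gB eta n \<le> ((1 - eta^2)^2 + eta^4) / (1 - eta^2)"
proof -
  have b: "0 < 1 - eta^2" using a_bounds by simp
  have e: "1 \<le> 1 + 2 * n * eta^2 * (1 - eta^2)" using assms b a_bounds by simp
  show "0 \<le> gB eta n" unfolding gB_def using b e by simp
  have "(1 - eta^2) * 1 \<le> (1 - eta^2) * (1 + 2 * n * eta^2 * (1 - eta^2))"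
    using e b by (intro mult_left_mono) auto
  then show "gB eta n \<le> ((1 - eta^2)^2 + eta^4) / (1 - eta^2)" unfolding gB_def
    using b e by (intro divide_left_mono) auto
qed

lemma c_lt1: "(1 - eta^2)^2 + eta^4 < 1"
proof -
  have "(1 - eta^2)^2 + eta^4 = 1 - 2 * eta^2 * (1 - eta^2)" by (simp add: power2_eq_square power4_eq_xxxx algebra_simps)
  moreover have "0 < eta^2 * (1 - eta^2)" using a_bounds by simp
  ultimately show ?thesis by simp
qed

lemma FF_le:
  assumes "N \<ge> 0" "0 \<le> xi" "xi \<le> 1"
  shows "FF eta xi N \<le> 1 / (1 - eta^2)"
proof -
  have n: "xi * N \<ge> 0" using assms by simp
  have b: "0 < 1 - eta^2" using a_bounds by simp
  have "FF eta xi N \<le> (1 - xi) * (1 / (1 - eta^2)) + xi * (((1 - eta^2)^2 + eta^4) / (1 - eta^2))"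
    unfolding FF_def using gA_bounds[OF n] gB_bounds[OF n] assms
    by (intro add_mono mult_left_mono) auto
  also have "\<dots> \<le> (1 - xi) * (1 / (1 - eta^2)) + xi * (1 / (1 - eta^2))"
    using c_lt1 b assms by (intro add_mono mult_left_mono divide_right_mono) auto
  also have "\<dots> = ((1 - xi) + xi) * (1 / (1 - eta^2))" by (rule distrib_right[symmetric])
  also have "\<dots> = 1 / (1 - eta^2)" by simp
  finally show ?thesis .
qed

lemma FF_mono:
  assumes "0 < N" "N \<le> N'" "0 \<le> xi" "xi \<le> 1"
  shows "FF eta xi N \<le> max (FF eta (xi * N / N') N') (((1 - eta^2)^2 + eta^4) / (1 - eta^2))"
proof -
  define n where "n = xi * N"
  define xi' where "xi' = xi * N / N'"
  have n0: "n \<ge> 0" using assms by (simp add: n_def)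
  have xn: "xi' * N' = n" using assms by (simp add: xi'_def n_def)
  have xle: "xi' \<le> xi" unfolding xi'_def using assms
    by (simp add: divide_le_eq mult_left_mono)
  have x0: "0 \<le> xi'" unfolding xi'_def using assms by simp
  show ?thesis
  proof (cases "gB eta n \<le> gA eta n")
    case True
    have "FF eta xi N = gA eta n - xi * (gA eta n - gB eta n)"
      unfolding FF_def n_def by (simp add: algebra_simps)
    also have "\<dots> \<le> gA eta n - xi' * (gA eta n - gB eta n)"
      using True xle by (simp add: mult_right_mono)
    also have "\<dots> = FF eta xi' N'" unfolding FF_def xn by (simp add: algebra_simps)
    finally show ?thesis unfolding xi'_def by simp
  next
    case False
    have "FF eta xi N \<le> (1 - xi) * gB eta n + xi * gB eta n"
      unfolding FF_def n_def[symmetric] using False assms by (intro add_mono mult_left_mono) auto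
    also have "\<dots> = gB eta n" by (simp add: algebra_simps)
    also have "\<dots> \<le> ((1 - eta^2)^2 + eta^4) / (1 - eta^2)" using gB_bounds[OF n0] by simp
    finally show ?thesis by simp
  qed
qed


lemma FF0: "FF eta 0 N = 1" unfolding FF_def gA_def by simp
lemma FF1: "FF eta 1 N = gB eta N" unfolding FF_def by simp

lemma core:
  assumes NN: "NN > 0"
    and cK: "\<exists>xi\<in>{0..1}. FF eta xi NN \<ge> ((1 - eta^2)^2 + eta^4) / (1 - eta^2)"
  shows "(\<forall>M \<ge> 1. QFI_tot eta M NN \<le> QFI_tot eta 1 NN) \<and>
     (\<exists>L. ((\<lambda>M. QFI_tot eta M NN) \<longlongrightarrow> L) at_top \<and> L \<le> QFI_tot eta 1 NN)"
proof -
  define c' where "c' = ((1 - eta^2)^2 + eta^4) / (1 - eta^2)"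
  have b: "0 < 1 - eta^2" using a_bounds by simp
  have eqM: "M * QFI eta xi (NN / M) = 4 * NN * FF eta xi (NN / M)" if "M > 0" for M xi
    using that by (simp add: QFI_eq)
  have bdd: "bdd_above ((\<lambda>xi. M * QFI eta xi (NN / M)) ` {0..1})" if "M \<ge> 1" for M
  proof (rule bdd_aboveI2)
    fix xi :: real assume "xi \<in> {0..1}"
    then show "M * QFI eta xi (NN / M) \<le> 4 * NN * (1 / (1 - eta^2))"
    proof -
      have "FF eta xi (NN / M) \<le> 1 / (1 - eta^2)"
        using that NN \<open>xi \<in> {0..1}\<close> FF_le[of "NN/M" xi] by simp
      then have "4 * NN * FF eta xi (NN / M) \<le> 4 * NN * (1 / (1 - eta^2))"
        by (rule mult_left_mono) (use NN in simp)
      then show ?thesis using eqM[of M xi] that by simp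
    qed
  qed
  have upM: "4 * NN * FF eta xi (NN / M) \<le> QFI_tot eta M NN" if "M \<ge> 1" "xi \<in> {0..1}" for M xi
  proof -
    have "M * QFI eta xi (NN / M) \<le> QFI_tot eta M NN"
      unfolding QFI_tot_def using that by (intro cSUP_upper bdd) auto
    then show ?thesis using eqM[of M xi] that by simp
  qed
  have up1: "4 * NN * FF eta xi NN \<le> QFI_tot eta 1 NN" if "xi \<in> {0..1}" for xi
    using upM[of 1 xi] that by simp
  have c1: "4 * NN * c' \<le> QFI_tot eta 1 NN"
  proof -
    obtain xi where xi: "xi \<in> {0..1}" "FF eta xi NN \<ge> c'" using cK c'_def by auto
    then show ?thesis using up1[OF xi(1)] NN by (smt (verit) mult_left_mono)
  qed
  have one: "4 * NN \<le> QFI_tot eta 1 NN" using up1[of 0] FF0 by simp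
  have P1: "QFI_tot eta M NN \<le> QFI_tot eta 1 NN" if M: "M \<ge> 1" for M
    unfolding QFI_tot_def[of eta M]
  proof (rule cSUP_least)
    show "{0..1::real} \<noteq> {}" by simp
    fix xi :: real assume xi: "xi \<in> {0..1}"
    have N: "0 < NN / M" "NN / M \<le> NN" using M NN by (auto simp: divide_le_eq)
    have xi': "xi * (NN / M) / NN \<in> {0..1}" using xi N NN M by (auto simp: divide_le_eq mult_le_one)
    have "FF eta xi (NN / M) \<le> max (FF eta (xi * (NN / M) / NN) NN) c'"
      unfolding c'_def using FF_mono[OF N] xi by auto
    then have "4 * NN * FF eta xi (NN / M) \<le> 4 * NN * max (FF eta (xi * (NN / M) / NN) NN) c'"
      using NN by simp
    also have "\<dots> \<le> QFI_tot eta 1 NN" using up1[OF xi'] c1 NN by simp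
    finally show "M * QFI eta xi (NN / M) \<le> QFI_tot eta 1 NN" using eqM[of M xi] M by simp
  qed
  define L where "L = 4 * NN * max 1 c'"
  have T: "((\<lambda>M. NN / M) \<longlongrightarrow> 0) at_top" by real_asymp
  have lowlim: "((\<lambda>M. 4 * NN * max 1 (gB eta (NN / M))) \<longlongrightarrow> 4 * NN * max 1 (gB eta 0)) at_top"
    unfolding gB_def using b by (intro tendsto_intros T) auto
  have gB0: "gB eta 0 = c'" unfolding gB_def c'_def by simp
  have sq: "((\<lambda>M. 2 * eta^2 * sqrt (NN / M * (1 + NN / M))) \<longlongrightarrow> 2 * eta^2 * sqrt (0 * (1 + 0))) at_top"
    by (intro tendsto_intros T)
  have uplim: "((\<lambda>M. 4 * NN * max (1 / (1 - 2 * eta^2 * sqrt (NN / M * (1 + NN / M)))) c')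
      \<longlongrightarrow> 4 * NN * max (1 / (1 - 2 * eta^2 * sqrt (0 * (1 + 0)))) c') at_top"
    by (intro tendsto_intros T) auto
  have ev1: "eventually (\<lambda>M. 2 * eta^2 * sqrt (NN / M * (1 + NN / M)) < 1) at_top"
    using order_tendstoD(2)[OF sq] by simp
  have ev2: "eventually (\<lambda>M::real. M \<ge> 1) at_top" by (rule eventually_ge_at_top)
  have lower: "eventually (\<lambda>M. 4 * NN * max 1 (gB eta (NN / M)) \<le> QFI_tot eta M NN) at_top"
    using ev2
  proof eventually_elim
    case (elim M)
    show ?case using upM[OF elim, of 0] upM[OF elim, of 1] FF0 FF1 by simp
  qed
  have upper: "eventually (\<lambda>M. QFI_tot eta M NN \<le> 4 * NN * max (1 / (1 - 2 * eta^2 * sqrt (NN / M * (1 + NN / M)))) c') at_top"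
    using ev1 ev2
  proof eventually_elim
    case (elim M)
    define N where "N = NN / M"
    define U where "U = 1 / (1 - 2 * eta^2 * sqrt (N * (1 + N)))"
    have N: "0 < N" "N \<le> NN" using elim NN by (auto simp: N_def divide_le_eq)
    have den: "0 < 1 - 2 * eta^2 * sqrt (N * (1 + N))" using elim(1) by (simp add: N_def)
    show ?case unfolding QFI_tot_def N_def[symmetric] U_def[symmetric]
    proof (rule cSUP_least)
      show "{0..1::real} \<noteq> {}" by simp
      fix xi :: real assume xi: "xi \<in> {0..1}"
      define n where "n = xi * N"
      have n: "0 \<le> n" "n \<le> N" using xi N by (auto simp: n_def mult_le_one mult_left_le_one_le)
      have "sqrt (n * (1 + n)) \<le> sqrt (N * (1 + N))"
        using n by (intro real_sqrt_le_mono mult_mono) auto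
      then have "sqrt (n * (1 + n)) - n \<le> sqrt (N * (1 + N))" using n by linarith
      then have "2 * eta^2 * sqrt (N * (1 + N)) \<ge> 2 * eta^2 * (sqrt (n * (1 + n)) - n)"
        using a_bounds by (intro mult_left_mono) auto
      then have gAU: "gA eta n \<le> U" unfolding gA_def U_def using den
        by (intro divide_left_mono mult_pos_pos) auto
      have "FF eta xi N \<le> (1 - xi) * U + xi * c'"
        unfolding FF_def n_def[symmetric] c'_def using gAU gB_bounds[OF n(1)] xi
        by (intro add_mono mult_left_mono) auto
      also have "\<dots> \<le> (1 - xi) * max U c' + xi * max U c'"
        using xi by (intro add_mono mult_left_mono) auto
      also have "\<dots> = max U c'" by (simp add: algebra_simps)
      finally have "FF eta xi N \<le> max U c'" .
      then have "4 * NN * FF eta xi N \<le> 4 * NN * max U c'" using NN by simp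
      then show "M * QFI eta xi N \<le> 4 * NN * max U c'"
        using eqM[of M xi] elim by (simp add: N_def)
    qed
  qed
  have lim: "((\<lambda>M. QFI_tot eta M NN) \<longlongrightarrow> L) at_top"
    by (rule tendsto_sandwich[OF lower upper]) (use lowlim uplim gB0 in \<open>auto simp: L_def\<close>)
  have "L \<le> QFI_tot eta 1 NN" unfolding L_def using c1 one by (simp add: max_def)
  then show ?thesis using P1 lim by blast
qed


lemma big: "\<exists>K0. \<forall>NN \<ge> K0. \<exists>xi\<in>{0..1}. FF eta xi NN \<ge> ((1 - eta^2)^2 + eta^4) / (1 - eta^2)"
proof -
  define c where "c = (1 - eta^2)^2 + eta^4"
  define d where "d = (1 - c) / 2"
  have b: "0 < 1 - eta^2" using a_bounds by simp
  have c: "c < 1" "0 \<le> c" using c_lt1 by (auto simp: c_def)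
  have d: "0 < d" "d \<le> 1" using c by (auto simp: d_def)
  have gl: "((\<lambda>m::real. sqrt (m * (1 + m)) - m) \<longlongrightarrow> 1/2) at_top" by real_asymp
  have dl: "filterlim (\<lambda>N::real. d * N) at_top at_top"
    using d by (intro filterlim_tendsto_pos_mult_at_top[OF tendsto_const] filterlim_ident) auto
  have gl2: "((\<lambda>N. sqrt (d * N * (1 + d * N)) - d * N) \<longlongrightarrow> 1/2) at_top"
    using filterlim_compose[OF gl dl] by simp
  have Al: "((\<lambda>N. (1 - d) * gA eta (d * N)) \<longlongrightarrow> (1 - d) * (1 / (1 - 2 * eta^2 * (1/2)))) at_top"
    unfolding gA_def using b by (intro tendsto_intros gl2) auto
  have lt: "c / (1 - eta^2) < (1 - d) * (1 / (1 - 2 * eta^2 * (1/2)))"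
  proof -
    have "c < 1 - d" using c unfolding d_def by (simp add: field_simps)
    then have "c / (1 - eta^2) < (1 - d) / (1 - eta^2)" using b by (rule divide_strict_right_mono)
    then show ?thesis by simp
  qed
  have "eventually (\<lambda>N. c / (1 - eta^2) < (1 - d) * gA eta (d * N)) at_top"
    by (rule order_tendstoD(1)[OF Al lt])
  moreover have "eventually (\<lambda>N::real. N \<ge> 0) at_top" by (rule eventually_ge_at_top)
  ultimately have "eventually (\<lambda>N. c / (1 - eta^2) \<le> FF eta d N) at_top"
  proof eventually_elim
    case (elim N)
    have n: "d * N \<ge> 0" using elim d by simp
    have "(1 - d) * gA eta (d * N) \<le> FF eta d N"
      unfolding FF_def using gB_bounds(1)[OF n] d by simp
    then show ?case using elim by simp
  qed
  then obtain K0 where "\<forall>N \<ge> K0. c / (1 - eta^2) \<le> FF eta d N"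
    by (auto simp: eventually_at_top_linorder)
  then show ?thesis using d unfolding c_def
    by (intro exI[of _ K0] allI impI bexI[of _ d]) auto
qed

lemma small:
  assumes "eta \<le> 1 / sqrt 2"
  shows "((1 - eta^2)^2 + eta^4) / (1 - eta^2) \<le> 1"
proof -
  have "eta^2 \<le> (1 / sqrt 2)^2" using assms e0 by (intro power_mono) auto
  then have a: "eta^2 \<le> 1/2" by (simp add: power_divide)
  have b: "0 < 1 - eta^2" using a_bounds by simp
  have "(1 - eta^2)^2 + eta^4 - (1 - eta^2) = eta^2 * (2 * eta^2 - 1)"
    by (simp add: power2_eq_square power4_eq_xxxx algebra_simps)
  also have "\<dots> \<le> 0" using a a_bounds by (intro mult_nonneg_nonpos) auto
  finally show ?thesis using b by simp
qed

end

theorem proposition6: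
  fixes eta :: real
  assumes "0 < eta" and "eta < 1"
  shows "\<exists>K \<ge> 0.
     (\<forall>NN > K.
        (\<forall>M \<ge> 1. QFI_tot eta M NN \<le> QFI_tot eta 1 NN) \<and>
        (\<exists>L. ((\<lambda>M. QFI_tot eta M NN) \<longlongrightarrow> L) at_top \<and> L \<le> QFI_tot eta 1 NN)) \<and>
     (eta \<le> 1 / sqrt 2 \<longrightarrow> K = 0) \<and>
     (eta > 1 / sqrt 2 \<longrightarrow> K \<ge> Nbar eta)"
proof (cases "eta \<le> 1 / sqrt 2")
  case True
  have "\<forall>NN > 0.
        (\<forall>M \<ge> 1. QFI_tot eta M NN \<le> QFI_tot eta 1 NN) \<and>
        (\<exists>L. ((\<lambda>M. QFI_tot eta M NN) \<longlongrightarrow> L) at_top \<and> L \<le> QFI_tot eta 1 NN)"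
  proof (intro allI impI)
    fix NN :: real assume NN: "NN > 0"
    show "(\<forall>M \<ge> 1. QFI_tot eta M NN \<le> QFI_tot eta 1 NN) \<and>
        (\<exists>L. ((\<lambda>M. QFI_tot eta M NN) \<longlongrightarrow> L) at_top \<and> L \<le> QFI_tot eta 1 NN)"
      using core[OF assms NN] small[OF assms True] FF0[OF assms, of NN] by force
  qed
  then show ?thesis using True by (intro exI[of _ 0]) auto
next
  case False
  obtain K0 where K0: "\<forall>NN \<ge> K0. \<exists>xi\<in>{0..1}. FF eta xi NN \<ge> ((1 - eta^2)^2 + eta^4) / (1 - eta^2)"
    using big[OF assms] by blast
  define K where "K = max (max K0 0) (Nbar eta)"
  have "\<forall>NN > K.
        (\<forall>M \<ge> 1. QFI_tot eta M NN \<le> QFI_tot eta 1 NN) \<and>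
        (\<exists>L. ((\<lambda>M. QFI_tot eta M NN) \<longlongrightarrow> L) at_top \<and> L \<le> QFI_tot eta 1 NN)"
  proof (intro allI impI)
    fix NN :: real assume NN: "NN > K"
    have NN0: "NN > 0" "NN \<ge> K0" using NN by (auto simp: K_def)
    show "(\<forall>M \<ge> 1. QFI_tot eta M NN \<le> QFI_tot eta 1 NN) \<and>
        (\<exists>L. ((\<lambda>M. QFI_tot eta M NN) \<longlongrightarrow> L) at_top \<and> L \<le> QFI_tot eta 1 NN)"
      using core[OF assms NN0(1)] K0 NN0(2) by blast
  qed
  then show ?thesis using False by (intro exI[of _ K]) (auto simp: K_def)
qed

end
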